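(* Let $P=(X,\prec)$ be a finite twin-free interval order containing no induced subposet isomorphic to any of $\mathbf{4}+\mathbf{1}$, $\mathbf{3}+\mathbf{1}+\mathbf{1}$, $Z$, $D$, $Y$, or the dual of $Y$, and let $\mathcal I=\{I(z)=[L(z),R(z)]:z\in X\}$ be a closed interval representation of $P$ such that (1) no interval strictly contains two other intervals, (2) no interval is strictly contained in two other intervals, and (3) whenever $I(u)\subsetneq I(v)$ there are unique $x,y\in X$ with $x$ peeking into $vu$ from the left and $y$ peeking into $vu$ from the right. Fix a proper inclusion $I(u)\subsetneq I(v)$ with left peeker $x$ and right peeker $y$, and replace $I(x)$ by $[L(x),L(v)]$ and $I(y)$ by $[R(v),R(y)]$, leaving all other intervals unchanged. Then the resulting set of closed intervals is again a closed interval representation of $P$, it again satisfies (1), (2), (3), and it has the same proper inclusions as $\mathcal I$ (that is, for all $a,b\in X$ the new interval of $a$ is properly contained in the new interval of $b$ if and only if $I(a)\subsetneq I(b)$).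
   Context: Posets are strict (irreflexive) partial orders; twins are points with exactly the same comparabilities; twin-free means no two distinct twins. A closed interval representation of $P$ assigns a closed real interval $[L(x),R(x)]$ to each $x$ with $x\prec y$ iff $R(x)<L(y)$; $P$ is an interval order if one exists. $I(u)$ is strictly contained in $I(v)$ if $I(u)\subset I(v)$ and they do not have identical endpoints. For $I(u)\subsetneq I(v)$: $x$ peeks into $vu$ if $I(x)$ meets $I(v)$ but not $I(u)$; from the left if moreover $R(x)\le L(u)$; from the right if moreover $R(u)\le L(x)$. Forbidden posets (unlisted, non-transitively-implied pairs incomparable): $\mathbf{4}+\mathbf{1}$: $a\prec b\prec c\prec d$ plus isolated $x$. $\mathbf{3}+\mathbf{1}+\mathbf{1}$: $a\prec b\prec c$ plus isolated $x,y$. $Z$: $a,b,c,d,x,y$ with $a\prec b\prec c\prec d$, $x\prec d$, $a\prec y$. $D$: $a,b,c,d,x$ with $a\prec b\prec d$, $a\prec c\prec d$. $Y$: $a,b,c,d,x$ with $a\prec d\prec b$, $a\prec d\prec c$. The dual reverses all comparabilities. *)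

theory Defs
  imports Complex_Main
begin

definition strict_poset :: "'a set \<Rightarrow> ('a \<Rightarrow> 'a \<Rightarrow> bool) \<Rightarrow> bool" where
  "strict_poset X lt \<longleftrightarrow>
     (\<forall>x\<in>X. \<not> lt x x) \<and>
     (\<forall>x\<in>X. \<forall>y\<in>X. \<forall>z\<in>X. lt x y \<longrightarrow> lt y z \<longrightarrow> lt x z)"

definition twins :: "'a set \<Rightarrow> ('a \<Rightarrow> 'a \<Rightarrow> bool) \<Rightarrow> 'a \<Rightarrow> 'a \<Rightarrow> bool" where
  "twins X lt x y \<longleftrightarrow> (\<forall>z\<in>X. (lt x z \<longleftrightarrow> lt y z) \<and> (lt z x \<longleftrightarrow> lt z y))"

definition twin_free :: "'a set \<Rightarrow> ('a \<Rightarrow> 'a \<Rightarrow> bool) \<Rightarrow> bool" where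
  "twin_free X lt \<longleftrightarrow> (\<forall>x\<in>X. \<forall>y\<in>X. x \<noteq> y \<longrightarrow> \<not> twins X lt x y)"

definition interval_rep ::
  "'a set \<Rightarrow> ('a \<Rightarrow> 'a \<Rightarrow> bool) \<Rightarrow> ('a \<Rightarrow> real) \<Rightarrow> ('a \<Rightarrow> real) \<Rightarrow> bool" where
  "interval_rep X lt L R \<longleftrightarrow>
     (\<forall>x\<in>X. L x \<le> R x) \<and> (\<forall>x\<in>X. \<forall>y\<in>X. lt x y \<longleftrightarrow> R x < L y)"

definition interval_order :: "'a set \<Rightarrow> ('a \<Rightarrow> 'a \<Rightarrow> bool) \<Rightarrow> bool" where
  "interval_order X lt \<longleftrightarrow> strict_poset X lt \<and> (\<exists>L R. interval_rep X lt L R)"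

definition contains_induced ::
  "'a set \<Rightarrow> ('a \<Rightarrow> 'a \<Rightarrow> bool) \<Rightarrow> 'b set \<Rightarrow> ('b \<Rightarrow> 'b \<Rightarrow> bool) \<Rightarrow> bool" where
  "contains_induced X lt Y q \<longleftrightarrow>
     (\<exists>f. inj_on f Y \<and> f ` Y \<subseteq> X \<and> (\<forall>a\<in>Y. \<forall>b\<in>Y. lt (f a) (f b) \<longleftrightarrow> q a b))"

text \<open>Forbidden posets, on ground sets {0..4} or {0..5} (all comparabilities listed,
  including transitively implied ones).\<close>

text \<open>4+1: a=0<b=1<c=2<d=3, x=4 isolated.\<close>
definition four_plus_one :: "nat \<Rightarrow> nat \<Rightarrow> bool" where
  "four_plus_one i j \<longleftrightarrow> i < j \<and> j \<le> 3"

text \<open>3+1+1: a=0<b=1<c=2, x=3, y=4 isolated.\<close>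
definition three_plus_one_plus_one :: "nat \<Rightarrow> nat \<Rightarrow> bool" where
  "three_plus_one_plus_one i j \<longleftrightarrow> i < j \<and> j \<le> 2"

text \<open>Z: a=0<b=1<c=2<d=3, x=4<d, a<y=5.\<close>
definition Z_poset :: "nat \<Rightarrow> nat \<Rightarrow> bool" where
  "Z_poset i j \<longleftrightarrow> (i < j \<and> j \<le> 3) \<or> (i, j) = (4, 3) \<or> (i, j) = (0, 5)"

text \<open>D: a=0<b=1<d=3, a<c=2<d, x=4 isolated.\<close>
definition D_poset :: "nat \<Rightarrow> nat \<Rightarrow> bool" where
  "D_poset i j \<longleftrightarrow> (i, j) \<in> {(0,1), (0,2), (0,3), (1,3), (2,3)}"

text \<open>Y: a=0<d=3<b=1, a<d<c=2, x=4 isolated.\<close>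
definition Y_poset :: "nat \<Rightarrow> nat \<Rightarrow> bool" where
  "Y_poset i j \<longleftrightarrow> (i, j) \<in> {(0,3), (3,1), (3,2), (0,1), (0,2)}"

definition dual_rel :: "('b \<Rightarrow> 'b \<Rightarrow> bool) \<Rightarrow> 'b \<Rightarrow> 'b \<Rightarrow> bool" where
  "dual_rel q a b \<longleftrightarrow> q b a"

definition strictly_in :: "('a \<Rightarrow> real) \<Rightarrow> ('a \<Rightarrow> real) \<Rightarrow> 'a \<Rightarrow> 'a \<Rightarrow> bool" where
  "strictly_in L R u v \<longleftrightarrow>
     L v \<le> L u \<and> R u \<le> R v \<and> (L u, R u) \<noteq> (L v, R v)"

definition meets :: "('a \<Rightarrow> real) \<Rightarrow> ('a \<Rightarrow> real) \<Rightarrow> 'a \<Rightarrow> 'a \<Rightarrow> bool" where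
  "meets L R x y \<longleftrightarrow> L x \<le> R y \<and> L y \<le> R x"

definition peeks :: "('a \<Rightarrow> real) \<Rightarrow> ('a \<Rightarrow> real) \<Rightarrow> 'a \<Rightarrow> 'a \<Rightarrow> 'a \<Rightarrow> bool" where
  "peeks L R x v u \<longleftrightarrow> meets L R x v \<and> \<not> meets L R x u"

definition peeks_left :: "('a \<Rightarrow> real) \<Rightarrow> ('a \<Rightarrow> real) \<Rightarrow> 'a \<Rightarrow> 'a \<Rightarrow> 'a \<Rightarrow> bool" where
  "peeks_left L R x v u \<longleftrightarrow> peeks L R x v u \<and> R x \<le> L u"

definition peeks_right :: "('a \<Rightarrow> real) \<Rightarrow> ('a \<Rightarrow> real) \<Rightarrow> 'a \<Rightarrow> 'a \<Rightarrow> 'a \<Rightarrow> bool" where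
  "peeks_right L R y v u \<longleftrightarrow> peeks L R y v u \<and> R u \<le> L y"

definition cond1 :: "'a set \<Rightarrow> ('a \<Rightarrow> real) \<Rightarrow> ('a \<Rightarrow> real) \<Rightarrow> bool" where
  "cond1 X L R \<longleftrightarrow> \<not> (\<exists>v\<in>X. \<exists>a\<in>X. \<exists>b\<in>X. a \<noteq> b \<and> strictly_in L R a v \<and> strictly_in L R b v)"

definition cond2 :: "'a set \<Rightarrow> ('a \<Rightarrow> real) \<Rightarrow> ('a \<Rightarrow> real) \<Rightarrow> bool" where
  "cond2 X L R \<longleftrightarrow> \<not> (\<exists>u\<in>X. \<exists>a\<in>X. \<exists>b\<in>X. a \<noteq> b \<and> strictly_in L R u a \<and> strictly_in L R u b)"

definition cond3 :: "'a set \<Rightarrow> ('a \<Rightarrow> real) \<Rightarrow> ('a \<Rightarrow> real) \<Rightarrow> bool" where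
  "cond3 X L R \<longleftrightarrow> (\<forall>u\<in>X. \<forall>v\<in>X. strictly_in L R u v \<longrightarrow>
      (\<exists>!x. x \<in> X \<and> peeks_left L R x v u) \<and> (\<exists>!y. y \<in> X \<and> peeks_right L R y v u))"

end

theory Submission
  imports Defs
begin

lemma si_iff: "strictly_in L R a b \<longleftrightarrow> L b \<le> L a \<and> R a \<le> R b \<and> (L a \<noteq> L b \<or> R a \<noteq> R b)"
  unfolding strictly_in_def by auto

lemma meets_iff:
  assumes "interval_rep X lt L R" "a \<in> X" "b \<in> X"
  shows "meets L R a b \<longleftrightarrow> \<not> lt a b \<and> \<not> lt b a"
  using assms unfolding interval_rep_def meets_def by auto

lemma pl_iff:
  assumes "interval_rep X lt L R" "p \<in> X" "v \<in> X" "u \<in> X"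
  shows "peeks_left L R p v u \<longleftrightarrow> meets L R p v \<and> \<not> meets L R p u \<and> lt p u"
  using assms unfolding interval_rep_def peeks_left_def peeks_def meets_def
  by (smt (verit))

lemma pr_iff:
  assumes "interval_rep X lt L R" "p \<in> X" "v \<in> X" "u \<in> X"
  shows "peeks_right L R p v u \<longleftrightarrow> meets L R p v \<and> \<not> meets L R p u \<and> lt u p"
  using assms unfolding interval_rep_def peeks_right_def peeks_def meets_def
  by (smt (verit))

lemma transfer:
  assumes r1: "interval_rep X lt L R" and r2: "interval_rep X lt L' R'"
    and s: "\<forall>a\<in>X. \<forall>b\<in>X. strictly_in L' R' a b \<longleftrightarrow> strictly_in L R a b"
    and c1: "cond1 X L R" and c2: "cond2 X L R" and c3: "cond3 X L R"
  shows "cond1 X L' R' \<and> cond2 X L' R' \<and> cond3 X L' R'"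
proof -
  have pl: "\<And>p v u. p \<in> X \<Longrightarrow> v \<in> X \<Longrightarrow> u \<in> X \<Longrightarrow>
     peeks_left L' R' p v u \<longleftrightarrow> peeks_left L R p v u"
    using pl_iff[OF r1] pl_iff[OF r2] meets_iff[OF r1] meets_iff[OF r2] by simp
  have pr: "\<And>p v u. p \<in> X \<Longrightarrow> v \<in> X \<Longrightarrow> u \<in> X \<Longrightarrow>
     peeks_right L' R' p v u \<longleftrightarrow> peeks_right L R p v u"
    using pr_iff[OF r1] pr_iff[OF r2] meets_iff[OF r1] meets_iff[OF r2] by simp
  have "cond1 X L' R'" using c1 s unfolding cond1_def by metis
  moreover have "cond2 X L' R'" using c2 s unfolding cond2_def by metis
  moreover have "cond3 X L' R'"
    unfolding cond3_def
  proof (intro ballI impI)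
    fix u v assume uv: "u \<in> X" "v \<in> X" "strictly_in L' R' u v"
    hence "strictly_in L R u v" using s by blast
    hence e: "(\<exists>!x. x \<in> X \<and> peeks_left L R x v u) \<and> (\<exists>!y. y \<in> X \<and> peeks_right L R y v u)"
      using c3 uv unfolding cond3_def by blast
    have e1: "(\<exists>!x. x \<in> X \<and> peeks_left L' R' x v u) = (\<exists>!x. x \<in> X \<and> peeks_left L R x v u)"
      by (rule arg_cong[where f=Ex1], rule ext) (use pl uv in blast)
    have e2: "(\<exists>!x. x \<in> X \<and> peeks_right L' R' x v u) = (\<exists>!x. x \<in> X \<and> peeks_right L R x v u)"
      by (rule arg_cong[where f=Ex1], rule ext) (use pr uv in blast)
    show "(\<exists>!x. x \<in> X \<and> peeks_left L' R' x v u) \<and> (\<exists>!y. y \<in> X \<and> peeks_right L' R' y v u)"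
      using e e1 e2 by simp
  qed
  ultimately show ?thesis by blast
qed

theorem proposition14:
  fixes X :: "'a set" and lt :: "'a \<Rightarrow> 'a \<Rightarrow> bool"
    and L R :: "'a \<Rightarrow> real" and u v x y :: 'a
  assumes "finite X"
    and "interval_order X lt"
    and "twin_free X lt"
    and "\<not> contains_induced X lt {0..4} four_plus_one"
    and "\<not> contains_induced X lt {0..4} three_plus_one_plus_one"
    and "\<not> contains_induced X lt {0..5} Z_poset"
    and "\<not> contains_induced X lt {0..4} D_poset"
    and "\<not> contains_induced X lt {0..4} Y_poset"
    and "\<not> contains_induced X lt {0..4} (dual_rel Y_poset)"
    and "interval_rep X lt L R"
    and "cond1 X L R" and "cond2 X L R" and "cond3 X L R"
    and "u \<in> X" and "v \<in> X" and "strictly_in L R u v"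
    and "x \<in> X" and "peeks_left L R x v u"
    and "y \<in> X" and "peeks_right L R y v u"
  shows "interval_rep X lt (L(y := R v)) (R(x := L v)) \<and>
         cond1 X (L(y := R v)) (R(x := L v)) \<and>
         cond2 X (L(y := R v)) (R(x := L v)) \<and>
         cond3 X (L(y := R v)) (R(x := L v)) \<and>
         (\<forall>a\<in>X. \<forall>b\<in>X. strictly_in (L(y := R v)) (R(x := L v)) a b \<longleftrightarrow> strictly_in L R a b)"
proof -
  note ir = assms(10) and c1 = assms(11) and c2 = assms(12) and c3 = assms(13)
  note uX = assms(14) and vX = assms(15) and xX = assms(17) and yX = assms(19)
  have LR: "\<And>a. a \<in> X \<Longrightarrow> L a \<le> R a" and ltI: "\<And>a b. a \<in> X \<Longrightarrow> b \<in> X \<Longrightarrow> lt a b \<longleftrightarrow> R a < L b"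
    using ir unfolding interval_rep_def by auto
  have su: "L v \<le> L u" "R u \<le> R v" "L u \<noteq> L v \<or> R u \<noteq> R v"
    using assms(16) unfolding si_iff by auto
  have px: "L x \<le> R v" "L v \<le> R x" "R x < L u"
    using assms(18) LR[OF uX] LR[OF xX] unfolding peeks_left_def peeks_def meets_def by auto
  have py: "L y \<le> R v" "L v \<le> R y" "R u < L y"
    using assms(20) LR[OF uX] LR[OF yX] unfolding peeks_right_def peeks_def meets_def by auto
  have nc1: "\<And>w a b. w \<in> X \<Longrightarrow> a \<in> X \<Longrightarrow> b \<in> X \<Longrightarrow> a \<noteq> b \<Longrightarrow> strictly_in L R a w \<Longrightarrow> strictly_in L R b w \<Longrightarrow> False"
    using c1 unfolding cond1_def by blast
  have nc2: "\<And>w a b. w \<in> X \<Longrightarrow> a \<in> X \<Longrightarrow> b \<in> X \<Longrightarrow> a \<noteq> b \<Longrightarrow> strictly_in L R w a \<Longrightarrow> strictly_in L R w b \<Longrightarrow> False"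
    using c2 unfolding cond2_def by blast
  have ux: "(\<exists>!x. x \<in> X \<and> peeks_left L R x v u)" "(\<exists>!y. y \<in> X \<and> peeks_right L R y v u)"
    using c3 uX vX assms(16) unfolding cond3_def by auto
  have K1: "\<And>a. a \<in> X \<Longrightarrow> a \<noteq> x \<Longrightarrow> R a < L u \<Longrightarrow> L a \<le> R v \<Longrightarrow> L v \<le> R a \<Longrightarrow> False"
  proof -
    fix a assume a: "a \<in> X" "a \<noteq> x" "R a < L u" "L a \<le> R v" "L v \<le> R a"
    have "peeks_left L R a v u" unfolding peeks_left_def peeks_def meets_def using a by auto
    thus False using ux(1) a assms(17,18) by blast
  qed
  have K2: "\<And>a. a \<in> X \<Longrightarrow> a \<noteq> y \<Longrightarrow> R u < L a \<Longrightarrow> L a \<le> R v \<Longrightarrow> L v \<le> R a \<Longrightarrow> False"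
  proof -
    fix a assume a: "a \<in> X" "a \<noteq> y" "R u < L a" "L a \<le> R v" "L v \<le> R a"
    have "peeks_right L R a v u" unfolding peeks_right_def peeks_def meets_def using a by auto
    thus False using ux(2) a assms(19,20) by blast
  qed
  have xu: "x \<noteq> u" using px LR[OF uX] by auto
  have yu: "y \<noteq> u" using py LR[OF uX] by auto
  have Lxv: "L x < L v"
  proof (rule ccontr)
    assume "\<not> L x < L v"
    hence "strictly_in L R x v" unfolding si_iff using px su LR[OF uX] by auto
    thus False using nc1[OF vX xX uX xu _ assms(16)] by blast
  qed
  have Ryv: "R v < R y"
  proof (rule ccontr)
    assume "\<not> R v < R y"
    hence "strictly_in L R y v" unfolding si_iff using py su LR[OF uX] by auto
    thus False using nc1[OF vX yX uX yu _ assms(16)] by blast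
  qed
  have LRv: "L v < R v" using su LR[OF uX] by auto
  have A: "\<And>b. b \<in> X \<Longrightarrow> L v < L b \<Longrightarrow> L b \<le> R x \<Longrightarrow> False"
  proof -
    fix b assume b: "b \<in> X" "L v < L b" "L b \<le> R x"
    show False
    proof (cases "R b \<le> R v")
      case True
      hence "strictly_in L R b v" unfolding si_iff using b by auto
      moreover have "b \<noteq> u" using b px by auto
      ultimately show False using nc1[OF vX b(1) uX _ _ assms(16)] by blast
    next
      case False
      hence "strictly_in L R u b" unfolding si_iff using b px su by auto
      moreover have "b \<noteq> v" using False by auto
      ultimately show False using nc2[OF uX b(1) vX _ _ assms(16)] by blast
    qed
  qed
  have B: "\<And>b. b \<in> X \<Longrightarrow> R b < R v \<Longrightarrow> L y \<le> R b \<Longrightarrow> False"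
  proof -
    fix b assume b: "b \<in> X" "R b < R v" "L y \<le> R b"
    show False
    proof (cases "L v \<le> L b")
      case True
      hence "strictly_in L R b v" unfolding si_iff using b by auto
      moreover have "b \<noteq> u" using b py by auto
      ultimately show False using nc1[OF vX b(1) uX _ _ assms(16)] by blast
    next
      case False
      hence "strictly_in L R u b" unfolding si_iff using b py su by auto
      moreover have "b \<noteq> v" using b by auto
      ultimately show False using nc2[OF uX b(1) vX _ _ assms(16)] by blast
    qed
  qed
  have A': "\<And>b. b \<in> X \<Longrightarrow> L v < L b \<Longrightarrow> R x < L b" using A by force
  have B': "\<And>b. b \<in> X \<Longrightarrow> R b < R v \<Longrightarrow> R b < L y" using B by force
  have "R x < L y" using px py LR[OF uX] by linarith
  hence xy: "x \<noteq> y" using LR[OF xX] by auto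
  define L' where "L' = L(y := R v)"
  define R' where "R' = R(x := L v)"
  have L'x: "L' x = L x" and R'y: "R' y = R y" using xy by (auto simp: L'_def R'_def)
  have rep: "interval_rep X lt L' R'"
    unfolding interval_rep_def
  proof (intro conjI ballI)
    fix a assume "a \<in> X" thus "L' a \<le> R' a"
      using LR Lxv Ryv LRv xy by (auto simp: L'_def R'_def)
  next
    fix a b assume ab: "a \<in> X" "b \<in> X"
    show "lt a b \<longleftrightarrow> R' a < L' b"
      unfolding ltI[OF ab]
      using A'[OF ab(2)] B'[OF ab(1)] LR[OF ab(1)] LR[OF ab(2)] LR[OF xX] LR[OF yX] LR[OF uX]
        px py su Lxv Ryv LRv xy
      by (cases "a = x"; cases "a = y"; cases "b = x"; cases "b = y") (auto simp: L'_def R'_def)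
  qed
  have sp: "\<forall>a\<in>X. \<forall>b\<in>X. strictly_in L' R' a b \<longleftrightarrow> strictly_in L R a b"
  proof (intro ballI)
    fix a b assume ab: "a \<in> X" "b \<in> X"
    show "strictly_in L' R' a b \<longleftrightarrow> strictly_in L R a b"
      unfolding si_iff
      using A[OF ab(2)] B[OF ab(1)] A[OF ab(1)] B[OF ab(2)] K1[OF ab(1)] K1[OF ab(2)] K2[OF ab(1)] K2[OF ab(2)]
        LR[OF ab(1)] LR[OF ab(2)] LR[OF xX] LR[OF yX] LR[OF uX]
        px py su Lxv Ryv LRv xy
      apply (cases "a = x"; cases "a = y"; cases "b = x"; cases "b = y")
      apply (simp_all add: L'_def R'_def)
      apply (smt (verit))+
      done
  qed
  show ?thesis using rep sp transfer[OF ir rep sp c1 c2 c3] unfolding L'_def R'_def by blast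
qed

end
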